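(* If $q<p$ are primes, then $N_{=}(qp)\ge p^2+2q^2p-4qp+2+(p-1)\min\{q-1,p-q\}$.
   Context: Graphs are finite, undirected and simple; the order of a graph is its number of vertices. For a positive integer $k$, $N_{=}(k)$ denotes the smallest integer $n\ge1$ such that every graph on $n$ vertices contains an induced regular subgraph (all vertices of the subgraph having the same degree within it) of order exactly $k$. *)

theory Defs
  imports Main "HOL-Computational_Algebra.Primes"
begin

definition simple_graph :: "'a set \<Rightarrow> ('a \<Rightarrow> 'a \<Rightarrow> bool) \<Rightarrow> bool" where
  "simple_graph V E \<longleftrightarrow> finite V \<and> (\<forall>x y. E x y \<longrightarrow> x \<in> V \<and> y \<in> V)
     \<and> (\<forall>x y. E x y \<longrightarrow> E y x) \<and> (\<forall>x. \<not> E x x)"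

definition deg_in :: "('a \<Rightarrow> 'a \<Rightarrow> bool) \<Rightarrow> 'a set \<Rightarrow> 'a \<Rightarrow> nat" where
  "deg_in E S x = card {y \<in> S. E x y}"

definition has_induced_regular :: "'a set \<Rightarrow> ('a \<Rightarrow> 'a \<Rightarrow> bool) \<Rightarrow> nat \<Rightarrow> bool" where
  "has_induced_regular V E k \<longleftrightarrow>
     (\<exists>S \<subseteq> V. card S = k \<and> (\<exists>d. \<forall>x \<in> S. deg_in E S x = d))"

text \<open>Graphs on n vertices are represented
  (up to isomorphism) with vertex set {0..<n}.\<close>
definition N_eq :: "nat \<Rightarrow> nat" where
  "N_eq k = (LEAST n. n \<ge> 1 \<and> (\<forall>E. simple_graph {0..<n} E \<longrightarrow> has_induced_regular {0..<n} E k))"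

end

theory Submission
  imports Defs "HOL-Library.Ramsey"
begin

definition adj :: "nat \<times> nat \<times> nat \<Rightarrow> nat \<times> nat \<times> nat \<Rightarrow> bool" where
  "adj x y \<longleftrightarrow> fst x = fst y \<and> fst (snd x) \<le> Suc (fst (snd y)) \<and> fst (snd y) \<le> Suc (fst (snd x)) \<and> x \<noteq> y"

lemma adj_sym: "adj x y \<Longrightarrow> adj y x"
  unfolding adj_def by auto

lemma adj_irrefl: "\<not> adj x x"
  unfolding adj_def by auto

lemma dom_lemma:
  assumes "adj x y" "fst (snd y) = 0 \<or> fst (snd y) = 3" "fst (snd x) < 4" "fst (snd w) < 4" "adj y w" "w \<noteq> x"
  shows "adj x w"
  using assms unfolding adj_def by auto

locale G8 =
  fixes q p :: nat
  assumes pp: "prime p" and pq: "prime q" and qlp: "q < p"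
begin

definition m where "m = min (q-1) (p-q)"
definition nc where "nc = q*p - 1 - m"
definition sz :: "nat \<Rightarrow> nat \<Rightarrow> nat" where
 "sz c t = (if 4 \<le> t then 0 else if c < m then (if t = 1 then q*p-p else p-1)
   else if c < q-1 then (if t=1 then q*p-1 else 0)
   else if c < p-1-m then (if t=1 then p-1 else 0)
   else if c < nc then (if t=1 then q-1 else 0) else 0)"
definition V :: "(nat \<times> nat \<times> nat) set" where
  "V = Sigma {..<nc} (\<lambda>c. Sigma {..<4} (\<lambda>t. {..<sz c t}))"

lemma q2: "q \<ge> 2" using pq prime_ge_2_nat by blast
lemma p3: "p \<ge> 3" using q2 qlp by linarith
lemma m_le: "m \<le> q - 1" "m \<le> p - q" unfolding m_def by auto
lemma qp_ge: "2 * p \<le> q * p" using q2 by simp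
lemma q_le: "q \<le> q * p" using p3 by simp
lemma sizes_le: "q - 1 \<le> q*p - 1" "p - 1 \<le> q*p - 1" "q*p - p + (p - 1) \<le> q*p - 1"
  "(p - 1) + (p - 1) \<le> q*p - 1" "p - 1 \<le> q * p - p"
  using q_le qp_ge p3 by linarith+
lemma ranges: "m \<le> q - 1" "q - 1 \<le> p - 1 - m" "p - 1 - m \<le> nc"
proof -
  show "m \<le> q - 1" using m_le by simp
  show "q - 1 \<le> p - 1 - m" using m_le qlp q2 by linarith
  show "p - 1 - m \<le> nc" using m_le qlp q2 qp_ge unfolding nc_def by linarith
qed

lemma sz_4: "4 \<le> t \<Longrightarrow> sz c t = 0" by (simp add: sz_def)
lemma sz_A: "c < m \<Longrightarrow> t < 4 \<Longrightarrow> sz c t = (if t = 1 then q*p-p else p-1)"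
  by (simp add: sz_def)
lemma sz_B: "m \<le> c \<Longrightarrow> c < q-1 \<Longrightarrow> sz c t = (if t = 1 then q*p-1 else 0)"
  by (simp add: sz_def)
lemma sz_C: "q-1 \<le> c \<Longrightarrow> c < p-1-m \<Longrightarrow> sz c t = (if t = 1 then p-1 else 0)"
  using ranges by (simp add: sz_def)
lemma sz_D: "p-1-m \<le> c \<Longrightarrow> c < nc \<Longrightarrow> sz c t = (if t = 1 then q-1 else 0)"
  using ranges by (simp add: sz_def)
lemma sz_E: "nc \<le> c \<Longrightarrow> sz c t = 0"
  using ranges by (simp add: sz_def)

lemma sz_cases:
  obtains "c < m" | "m \<le> c" "c < q-1" | "q-1 \<le> c" "c < p-1-m" | "p-1-m \<le> c" "c < nc" | "nc \<le> c"
  by linarith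

lemma sz_ge_m: "m \<le> c \<Longrightarrow> t \<noteq> 1 \<Longrightarrow> sz c t = 0"
  apply (cases c rule: sz_cases)
  using sz_B sz_C sz_D sz_E ranges by auto

lemma finV: "finite V" unfolding V_def by auto

lemma inV: "(c,t,j) \<in> V \<longleftrightarrow> c < nc \<and> t < 4 \<and> j < sz c t"
  unfolding V_def by auto

lemma typ_lt4: "x \<in> V \<Longrightarrow> fst (snd x) < 4"
  by (cases x) (auto simp: inV)

lemma typ_ge_m: "x \<in> V \<Longrightarrow> fst x \<ge> m \<Longrightarrow> fst (snd x) = 1"
  by (cases x) (auto simp: inV dest: sz_ge_m)

lemma sz_le1: "sz c t \<le> q*p - 1"
proof (cases c rule: sz_cases)
  case 1 then show ?thesis
    using sizes_le by (cases "t < 4") (auto simp: sz_A sz_4)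
next
  case 2 then show ?thesis by (simp add: sz_B)
next
  case 3 then have "sz c t \<le> p - 1" by (simp add: sz_C)
  then show ?thesis using sizes_le(2) by linarith
next
  case 4 then have "sz c t \<le> q - 1" by (simp add: sz_D)
  then show ?thesis using sizes_le(1) by linarith
next
  case 5 then show ?thesis by (simp add: sz_E)
qed

lemma sz_pair_all: "sz c t + sz c (Suc t) \<le> q*p - 1"
proof (cases c rule: sz_cases)
  case 1
  show ?thesis
  proof (cases "Suc t < 4")
    case True
    then show ?thesis using 1 sizes_le by (auto simp: sz_A)
  next
    case False
    then show ?thesis using sz_le1[of c t] by (simp add: sz_4)
  qed
next
  case 2 then show ?thesis by (simp add: sz_B)
next
  case 3 then have "sz c t + sz c (Suc t) \<le> p - 1" by (simp add: sz_C)
  then show ?thesis using sizes_le(2) by linarith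
next
  case 4 then have "sz c t + sz c (Suc t) \<le> q - 1" by (simp add: sz_D)
  then show ?thesis using sizes_le(1) by linarith
next
  case 5 then show ?thesis by (simp add: sz_E)
qed

lemma sz_pair_ge_q1: "c \<ge> q - 1 \<Longrightarrow> sz c t + sz c (Suc t) \<le> p - 1"
  apply (cases c rule: sz_cases)
  using sz_C sz_D sz_E ranges qlp by auto

lemma sz_pair_ge_p1m: "c \<ge> p - 1 - m \<Longrightarrow> sz c t + sz c (Suc t) \<le> q - 1"
  apply (cases c rule: sz_cases)
  using sz_D sz_E ranges by auto


definition blk where "blk c t = {x. fst x = c \<and> fst (snd x) = t} \<inter> V"

lemma blk_card: "card (blk c t) \<le> sz c t"
proof -
  have "blk c t \<subseteq> (\<lambda>j. (c,t,j)) ` {..<sz c t}"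
    by (auto simp: blk_def V_def)
  moreover have "card ((\<lambda>j. (c,t,j)) ` {..<sz c t}) = sz c t"
    by (simp add: card_image inj_on_def)
  ultimately show ?thesis
    by (metis card_mono finite_imageI finite_lessThan)
qed

lemma fin_blk: "finite (blk c t)"
  unfolding blk_def using finV by blast

lemma card_sub_blk: "X \<subseteq> blk c t \<Longrightarrow> card X \<le> sz c t"
  using card_mono[OF fin_blk, of X c t] blk_card[of c t] by linarith

lemma adjD: "adj x y \<Longrightarrow> fst x = fst y \<and> fst (snd x) \<le> Suc (fst (snd y)) \<and> fst (snd y) \<le> Suc (fst (snd x)) \<and> x \<noteq> y"
  unfolding adj_def by blast

lemma adjI: "fst x = fst y \<Longrightarrow> fst (snd x) \<le> Suc (fst (snd y)) \<Longrightarrow> fst (snd y) \<le> Suc (fst (snd x)) \<Longrightarrow> x \<noteq> y \<Longrightarrow> adj x y"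
  unfolding adj_def by blast

lemma blk_iff: "u \<in> blk c t \<longleftrightarrow> fst u = c \<and> fst (snd u) = t \<and> u \<in> V"
  unfolding blk_def by blast

lemma near: "u = x \<or> adj x u \<Longrightarrow> fst u = fst x \<and> fst (snd u) \<le> Suc (fst (snd x)) \<and> fst (snd x) \<le> Suc (fst (snd u))"
  unfolding adj_def by auto

lemma cl_use: "\<forall>u\<in>X. \<forall>v\<in>X. u \<noteq> v \<longrightarrow> adj u v \<Longrightarrow> u \<in> X \<Longrightarrow> v \<in> X \<Longrightarrow> v = u \<or> adj u v"
  by auto

lemma clique_blocks:
  assumes XV: "X \<subseteq> V" and cl: "\<forall>u\<in>X. \<forall>v\<in>X. u \<noteq> v \<longrightarrow> adj u v" and x0: "x0 \<in> X"
  shows "\<exists>t. X \<subseteq> blk (fst x0) t \<union> blk (fst x0) (Suc t)"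
proof (cases "\<exists>y\<in>X. fst (snd y) + 1 = fst (snd x0)")
  case True
  then obtain y where y: "y \<in> X" "fst (snd y) + 1 = fst (snd x0)" by blast
  have "X \<subseteq> blk (fst x0) (fst (snd y)) \<union> blk (fst x0) (Suc (fst (snd y)))"
  proof
    fix u assume u: "u \<in> X"
    have a: "u = x0 \<or> adj x0 u" using cl_use[OF cl x0 u] .
    have b: "u = y \<or> adj y u" using cl_use[OF cl y(1) u] .
    note na = near[OF a] and nb = near[OF b]
    have c2: "fst (snd u) = fst (snd y) \<or> fst (snd u) = Suc (fst (snd y))"
      using na nb y(2) by auto
    have uV: "u \<in> V" using subsetD[OF XV u] .
    show "u \<in> blk (fst x0) (fst (snd y)) \<union> blk (fst x0) (Suc (fst (snd y)))"
      using na c2 uV by (auto simp: blk_iff)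
  qed
  then show ?thesis by (rule exI[where x="fst (snd y)"])
next
  case False
  have "X \<subseteq> blk (fst x0) (fst (snd x0)) \<union> blk (fst x0) (Suc (fst (snd x0)))"
  proof
    fix u assume u: "u \<in> X"
    have a: "u = x0 \<or> adj x0 u" using cl_use[OF cl x0 u] .
    note na = near[OF a]
    have "fst (snd u) + 1 \<noteq> fst (snd x0)" using False u by blast
    then have c2: "fst (snd u) = fst (snd x0) \<or> fst (snd u) = Suc (fst (snd x0))"
      using na by auto
    have uV: "u \<in> V" using subsetD[OF XV u] .
    show "u \<in> blk (fst x0) (fst (snd x0)) \<union> blk (fst x0) (Suc (fst (snd x0)))"
      using na c2 uV by (auto simp: blk_iff)
  qed
  then show ?thesis by (rule exI[where x="fst (snd x0)"])
qed

lemma clique_card: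
  assumes XV: "X \<subseteq> V" and cl: "\<forall>u\<in>X. \<forall>v\<in>X. u \<noteq> v \<longrightarrow> adj u v" and x0: "x0 \<in> X"
  shows "\<exists>t. card X \<le> sz (fst x0) t + sz (fst x0) (Suc t)"
proof -
  obtain t where t: "X \<subseteq> blk (fst x0) t \<union> blk (fst x0) (Suc t)"
    using clique_blocks[OF assms] by blast
  have "card X \<le> card (blk (fst x0) t \<union> blk (fst x0) (Suc t))"
    using card_mono[OF finite_UnI[OF fin_blk fin_blk] t] .
  also have "\<dots> \<le> card (blk (fst x0) t) + card (blk (fst x0) (Suc t))" by (rule card_Un_le)
  also have "\<dots> \<le> sz (fst x0) t + sz (fst x0) (Suc t)" using blk_card add_mono by blast
  finally show ?thesis by blast
qed

lemma nonadj_pair: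
  assumes XV: "X \<subseteq> V" and YV: "Y \<subseteq> V"
    and clX: "\<forall>u\<in>X. \<forall>v\<in>X. u \<noteq> v \<longrightarrow> adj u v"
    and na: "\<forall>u\<in>X. \<forall>v\<in>Y. \<not> adj u v" and dj: "X \<inter> Y = {}"
    and cX: "\<forall>u\<in>X. fst u = c" and cY: "\<forall>v\<in>Y. fst v = c"
    and u0: "u0 \<in> X"
  shows "X \<subseteq> blk c 0 \<or> X \<subseteq> blk c 3 \<or> Y \<subseteq> blk c 0 \<or> Y \<subseteq> blk c 3"
proof (cases "\<exists>u\<in>X. fst (snd u) = 1 \<or> fst (snd u) = 2")
  case True
  then obtain u1 where u1: "u1 \<in> X" "fst (snd u1) = 1 \<or> fst (snd u1) = 2" by blast
  have "Y \<subseteq> blk c (if fst (snd u1) = 1 then 3 else 0)"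
  proof
    fix v assume v: "v \<in> Y"
    have "\<not> adj u1 v" "u1 \<noteq> v" "fst u1 = fst v" using na dj cX cY u1 v by auto
    moreover have "fst (snd v) < 4" using v YV typ_lt4 by blast
    ultimately show "v \<in> blk c (if fst (snd u1) = 1 then 3 else 0)"
      using u1 v YV cY unfolding blk_def adj_def by auto
  qed
  then show ?thesis by (auto split: if_splits)
next
  case False
  have t: "fst (snd u0) = 0 \<or> fst (snd u0) = 3" using False u0 XV typ_lt4 by fastforce
  have "X \<subseteq> blk c (fst (snd u0))"
  proof
    fix u assume u: "u \<in> X"
    show "u \<in> blk c (fst (snd u0))"
    proof (cases "u = u0")
      case True then show ?thesis using u0 XV cX unfolding blk_def by auto
    next
      case False2: False
      then have a: "adj u0 u" using cl_use[OF clX u0 u] by simp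
      have "fst (snd u) < 4" using u XV typ_lt4 by blast
      moreover have "\<not> (fst (snd u) = 1 \<or> fst (snd u) = 2)" using False u by blast
      ultimately have "fst (snd u) = 0 \<or> fst (snd u) = 3" by auto
      then show ?thesis using t a u XV cX unfolding blk_def adj_def by auto
    qed
  qed
  then show ?thesis using t by auto
qed

end

locale G8S = G8 +
  fixes S :: "(nat \<times> nat \<times> nat) set" and d :: nat
  assumes SV: "S \<subseteq> V" and reg: "\<forall>x\<in>S. deg_in adj S x = d"
begin

definition NS where "NS x = {y\<in>S. y = x \<or> adj x y}"

lemma finS: "finite S" using finV SV finite_subset by blast

lemma finNS: "finite (NS x)" unfolding NS_def using finS by simp

lemma NS_sub: "NS x \<subseteq> S" by (auto simp: NS_def)

lemma NS_self: "x \<in> S \<Longrightarrow> x \<in> NS x" by (simp add: NS_def)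

lemma NS_card: assumes x: "x \<in> S" shows "card (NS x) = Suc d"
proof -
  have e: "NS x = insert x {y\<in>S. adj x y}" using x by (auto simp: NS_def)
  have n: "x \<notin> {y\<in>S. adj x y}" using adj_irrefl by auto
  have f: "finite {y\<in>S. adj x y}" using finS by auto
  have "card (NS x) = Suc (card {y\<in>S. adj x y})" unfolding e using n f by simp
  then show ?thesis using reg x by (simp add: deg_in_def)
qed

lemma NS_mem: "y \<in> NS x \<longleftrightarrow> y \<in> S \<and> (y = x \<or> adj x y)"
  by (simp add: NS_def)

lemma key:
  assumes x: "x \<in> S" and y: "y \<in> S" and z: "z \<in> S"
    and axy: "adj x y" and axz: "adj x z" and nyz: "\<not> adj y z" and yz: "y \<noteq> z"
    and ty: "fst (snd y) = 0 \<or> fst (snd y) = 3"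
  shows False
proof -
  have sub: "NS y \<subseteq> NS x"
  proof
    fix w assume w: "w \<in> NS y"
    then have wS: "w \<in> S" and wy: "w = y \<or> adj y w" by (auto simp: NS_mem)
    show "w \<in> NS x"
    proof (cases "w = x")
      case True then show ?thesis using x NS_self by simp
    next
      case False
      show ?thesis
      proof (cases "w = y")
        case True then show ?thesis using axy y by (simp add: NS_mem)
      next
        case False2: False
        then have "adj y w" using wy by simp
        moreover have "fst (snd x) < 4" using x SV typ_lt4 by blast
        moreover have "fst (snd w) < 4" using wS SV typ_lt4 by blast
        ultimately have "adj x w" using dom_lemma[OF axy ty] False by blast
        then show ?thesis using wS by (simp add: NS_mem)
      qed
    qed
  qed
  have zx: "z \<in> NS x" using z axz by (simp add: NS_mem)
  have zy: "z \<notin> NS y" using nyz yz by (auto simp: NS_mem)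
  have "NS y \<subset> NS x" using sub zx zy by blast
  then have "card (NS y) < card (NS x)" using psubset_card_mono finNS by blast
  then show False using NS_card x y by simp
qed

lemma NS_clique:
  assumes x: "x \<in> S" and y: "y \<in> NS x" and z: "z \<in> NS x" and yz: "y \<noteq> z"
  shows "adj y z"
proof (rule ccontr)
  assume nyz: "\<not> adj y z"
  have yS: "y \<in> S" and zS: "z \<in> S" using y z by (auto simp: NS_mem)
  have yx: "y \<noteq> x"
  proof
    assume "y = x"
    then have "adj x z" using z yz by (auto simp: NS_mem)
    then show False using nyz \<open>y = x\<close> by simp
  qed
  have zx: "z \<noteq> x"
  proof
    assume "z = x"
    then have "adj x y" using y yz by (auto simp: NS_mem)
    then have "adj y x" by (rule adj_sym)
    then show False using nyz \<open>z = x\<close> by simp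
  qed
  have axy: "adj x y" using y yx by (simp add: NS_mem)
  have axz: "adj x z" using z zx by (simp add: NS_mem)
  have nzy: "\<not> adj z y" using nyz adj_sym by blast
  have t4: "fst (snd y) < 4" "fst (snd z) < 4" using yS zS SV typ_lt4 by blast+
  have "fst (snd y) = 0 \<or> fst (snd y) = 3 \<or> fst (snd z) = 0 \<or> fst (snd z) = 3"
  proof -
    have a1: "fst (snd x) \<le> Suc (fst (snd y)) \<and> fst (snd y) \<le> Suc (fst (snd x))" using adjD[OF axy] by simp
    have a2: "fst (snd x) \<le> Suc (fst (snd z)) \<and> fst (snd z) \<le> Suc (fst (snd x))" using adjD[OF axz] by simp
    have a3: "fst y = fst z" using adjD[OF axy] adjD[OF axz] by simp
    have "\<not> (fst (snd y) \<le> Suc (fst (snd z)) \<and> fst (snd z) \<le> Suc (fst (snd y)))"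
      using nyz yz a3 adjI by blast
    then show ?thesis using a1 a2 t4 by linarith
  qed
  then show False
    using key[OF x yS zS axy axz nyz yz] key[OF x zS yS axz axy nzy yz[symmetric]] by blast
qed

lemma NS_eq: assumes x: "x \<in> S" and u: "u \<in> NS x" shows "NS u = NS x"
proof -
  have uS: "u \<in> S" using u by (simp add: NS_mem)
  have "NS x \<subseteq> NS u"
  proof
    fix w assume w: "w \<in> NS x"
    show "w \<in> NS u"
    proof (cases "w = u")
      case True then show ?thesis using uS NS_self by simp
    next
      case False
      then have "adj u w" using NS_clique[OF x u w] by simp
      then show ?thesis using w by (simp add: NS_mem)
    qed
  qed
  moreover have "card (NS x) = card (NS u)" using NS_card x uS by simp
  ultimately show ?thesis using card_subset_eq[OF finNS] by metis
qed

definition F where "F = NS ` S"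

lemma F_obtain:
  assumes "X \<in> F" obtains x where "x \<in> S" "X = NS x"
  using assms unfolding F_def by (rule imageE) (rule that, assumption+)

lemma F_disj: "X \<in> F \<Longrightarrow> Y \<in> F \<Longrightarrow> X \<noteq> Y \<Longrightarrow> X \<inter> Y = {}"
proof -
  assume X: "X \<in> F" and Y: "Y \<in> F" and ne: "X \<noteq> Y"
  obtain x where x: "x \<in> S" "X = NS x" using X by (rule F_obtain)
  obtain y where y: "y \<in> S" "Y = NS y" using Y by (rule F_obtain)
  show "X \<inter> Y = {}"
  proof (rule ccontr)
    assume "X \<inter> Y \<noteq> {}"
    then obtain w where "w \<in> X" "w \<in> Y" by auto
    then have "w \<in> NS x" "w \<in> NS y" using x y by simp_all
    then have "NS w = NS x" "NS w = NS y" using NS_eq[OF x(1)] NS_eq[OF y(1)] by blast+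
    then show False using ne x(2) y(2) by simp
  qed
qed

lemma F_Union: "\<Union>F = S"
proof
  show "\<Union>F \<subseteq> S" unfolding F_def using NS_sub by (simp add: UN_least)
  show "S \<subseteq> \<Union>F"
  proof
    fix x assume "x \<in> S"
    then show "x \<in> \<Union>F" unfolding F_def using NS_self by (intro UnionI[of "NS x"]) auto
  qed
qed

lemma finF: "finite F" unfolding F_def using finS by simp

lemma F_card: "X \<in> F \<Longrightarrow> card X = Suc d"
  unfolding F_def using NS_card by auto

lemma card_S: "card S = card F * Suc d"
proof -
  have "pairwise disjnt F" unfolding pairwise_def disjnt_def using F_disj by blast
  then have "card (\<Union>F) = sum card F"
    by (rule card_Union_disjoint) (auto simp: F_def finNS)
  also have "\<dots> = sum (\<lambda>_. Suc d) F" using F_card by (rule sum.cong[OF refl])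
  also have "\<dots> = card F * Suc d" by simp
  finally show ?thesis using F_Union by simp
qed

lemma F_clique: "X \<in> F \<Longrightarrow> \<forall>u\<in>X. \<forall>v\<in>X. u \<noteq> v \<longrightarrow> adj u v"
  unfolding F_def using NS_clique by blast

lemma F_V: "X \<in> F \<Longrightarrow> X \<subseteq> V"
  unfolding F_def using NS_sub SV by blast

lemma F_ne: "X \<in> F \<Longrightarrow> X \<noteq> {}"
  unfolding F_def using NS_self by blast

lemma F_nonadj: assumes X: "X \<in> F" and Y: "Y \<in> F" and ne: "X \<noteq> Y" and u: "u \<in> X" and v: "v \<in> Y"
  shows "\<not> adj u v"
proof
  assume a: "adj u v"
  obtain x where x: "x \<in> S" "X = NS x" using X by (rule F_obtain)
  have uS: "u \<in> S" using u x NS_sub by blast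
  have vS: "v \<in> S" using v Y F_def NS_sub by blast
  have "v \<in> NS u" using a vS by (simp add: NS_mem)
  moreover have "NS u = X" using NS_eq[OF x(1)] x(2) u by blast
  ultimately have "v \<in> X \<inter> Y" using v by simp
  then show False using F_disj[OF X Y ne] by simp
qed

definition cX where "cX X = fst (SOME u. u \<in> X)"

lemma cX_fst: assumes X: "X \<in> F" and u: "u \<in> X" shows "fst u = cX X"
proof -
  have s: "(SOME u. u \<in> X) \<in> X" using u by (rule someI)
  have "u = (SOME u. u \<in> X) \<or> adj (SOME u. u \<in> X) u"
    using cl_use[OF F_clique[OF X] s u] .
  then show ?thesis unfolding cX_def using adjD by metis
qed

end

context G8
begin

lemma divisors:
  assumes "D dvd q * p"
  shows "D = 1 \<or> D = q \<or> D = p \<or> D = q * p"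
proof (cases "p dvd D")
  case True
  then obtain e where e: "D = p * e" by blast
  have "p * e dvd p * q" using assms e by (simp add: mult.commute)
  then have "e dvd q" using pp by (simp add: prime_gt_0_nat)
  then have "e = 1 \<or> e = q" using pq prime_nat_iff by blast
  then show ?thesis using e by (auto simp: mult.commute)
next
  case False
  then have "coprime p D" using pp prime_imp_coprime by blast
  then have "coprime D p" by (simp add: coprime_commute)
  then have "D dvd q" using assms coprime_dvd_mult_left_iff by blast
  then show ?thesis using pq prime_nat_iff by blast
qed

end

context G8S
begin

lemma slot_count:
  assumes B: "m \<le> B" and cb: "\<forall>X\<in>F. cX X < B"
  shows "card F \<le> B + m"
proof -
  define sl :: "(nat \<times> nat \<times> nat) set \<Rightarrow> nat \<times> nat" where "sl X = (cX X, if \<exists>u\<in>X. fst (snd u) \<le> 1 then 0 else (1::nat))" for X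
  have img: "sl ` F \<subseteq> {..<B} \<times> {0} \<union> {..<m} \<times> {1}"
  proof
    fix z assume "z \<in> sl ` F"
    then obtain X where X: "X \<in> F" and z: "z = sl X" by (rule imageE)
    show "z \<in> {..<B} \<times> {0} \<union> {..<m} \<times> {1}"
    proof (cases "\<exists>u\<in>X. fst (snd u) \<le> 1")
      case True then show ?thesis using z cb X by (simp add: sl_def)
    next
      case False
      obtain u where u: "u \<in> X" using F_ne[OF X] by blast
      have uV: "u \<in> V" using F_V[OF X] u by blast
      have "fst (snd u) \<noteq> 1" using False u by auto
      then have "cX X < m" using typ_ge_m[OF uV] cX_fst[OF X u] by linarith
      then show ?thesis using z False by (simp add: sl_def)
    qed
  qed
  have inj: "inj_on sl F"
  proof (rule inj_onI, rule ccontr)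
    fix X Y assume X: "X \<in> F" and Y: "Y \<in> F" and e: "sl X = sl Y" and ne: "X \<noteq> Y"
    have c: "cX X = cX Y" using e by (simp add: sl_def)
    have dj: "X \<inter> Y = {}" using F_disj[OF X Y ne] .
    show False
    proof (cases "\<exists>u\<in>X. fst (snd u) \<le> 1")
      case True
      then have "snd (sl X) = 0" unfolding sl_def by simp
      then have "snd (sl Y) = 0" using e by simp
      then have "\<exists>u\<in>Y. fst (snd u) \<le> 1" unfolding sl_def by (simp only: snd_conv split: if_split_asm; simp)
      then obtain v where v: "v \<in> Y" "fst (snd v) \<le> 1" by blast
      obtain u where u: "u \<in> X" "fst (snd u) \<le> 1" using True by blast
      have "u \<noteq> v"
      proof
        assume "u = v" then show False using dj u v by auto
      qed
      moreover have "fst u = fst v" using cX_fst[OF X u(1)] cX_fst[OF Y v(1)] c by simp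
      ultimately have "adj u v" using u(2) v(2) by (intro adjI) auto
      then show False using F_nonadj[OF X Y ne u(1) v(1)] by simp
    next
      case False
      then have "snd (sl X) = 1" unfolding sl_def by simp
      then have "snd (sl Y) = 1" using e by simp
      then have "\<not> (\<exists>u\<in>Y. fst (snd u) \<le> 1)" unfolding sl_def by (simp only: snd_conv split: if_split_asm; simp)
      moreover obtain v where v: "v \<in> Y" using F_ne[OF Y] by blast
      ultimately have "\<not> fst (snd v) \<le> 1" by blast
      then have v2: "fst (snd v) \<ge> 2" by linarith
      obtain u where u: "u \<in> X" using F_ne[OF X] by blast
      have "\<not> fst (snd u) \<le> 1" using False u by blast
      then have u2: "fst (snd u) \<ge> 2" by linarith
      have "fst (snd u) < 4" "fst (snd v) < 4" using u v F_V[OF X] F_V[OF Y] typ_lt4 by blast+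
      moreover have "u \<noteq> v"
      proof
        assume "u = v" then show False using dj u v by auto
      qed
      moreover have "fst u = fst v" using cX_fst[OF X u(1)] cX_fst[OF Y v(1)] c by simp
      ultimately have "adj u v" using u2 v2 by (intro adjI) auto
      then show False using F_nonadj[OF X Y ne u v] by simp
    qed
  qed
  have "card F = card (sl ` F)" using inj by (simp add: card_image)
  also have "\<dots> \<le> card ({..<B} \<times> {0::nat} \<union> {..<m} \<times> {1})"
    by (rule card_mono[OF _ img]) simp
  also have "\<dots> = B + m"
    by (subst card_Un_disjoint) (auto simp: card_cartesian_product)
  finally show ?thesis .
qed

lemma comp_count:
  assumes cb: "\<forall>X\<in>F. cX X < q - 1" and big: "\<forall>X\<in>F. card X \<ge> p"
  shows "card F \<le> q - 1"
proof -
  have inj: "inj_on cX F"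
  proof (rule inj_onI, rule ccontr)
    fix X Y assume X: "X \<in> F" and Y: "Y \<in> F" and e: "cX X = cX Y" and ne: "X \<noteq> Y"
    obtain u0 where u0: "u0 \<in> X" using F_ne[OF X] by blast
    have na: "\<forall>u\<in>X. \<forall>v\<in>Y. \<not> adj u v" using F_nonadj[OF X Y ne] by blast
    have cXX: "\<forall>u\<in>X. fst u = cX X" using cX_fst[OF X] by blast
    have cYY: "\<forall>v\<in>Y. fst v = cX X" using cX_fst[OF Y] e by simp
    have "X \<subseteq> blk (cX X) 0 \<or> X \<subseteq> blk (cX X) 3 \<or> Y \<subseteq> blk (cX X) 0 \<or> Y \<subseteq> blk (cX X) 3"
      using nonadj_pair[OF F_V[OF X] F_V[OF Y] F_clique[OF X] na F_disj[OF X Y ne] cXX cYY u0] .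
    moreover have "sz (cX X) 0 < p" "sz (cX X) 3 < p"
    proof -
      have "cX X < q - 1" using cb X by blast
      show "sz (cX X) 0 < p"
      proof (cases "cX X < m")
        case True then show ?thesis using sz_A[of "cX X" 0] p3 by simp
      next
        case False then show ?thesis using sz_ge_m[of "cX X" 0] p3 by simp
      qed
      show "sz (cX X) 3 < p"
      proof (cases "cX X < m")
        case True then show ?thesis using sz_A[of "cX X" 3] p3 by simp
      next
        case False then show ?thesis using sz_ge_m[of "cX X" 3] p3 by simp
      qed
    qed
    ultimately have "card X < p \<or> card Y < p"
      using card_sub_blk by (meson le_less_trans)
    then show False using big X Y by fastforce
  qed
  have "card F = card (cX ` F)" using inj by (simp add: card_image)
  also have "\<dots> \<le> card {..<q-1}" by (rule card_mono) (use cb in auto)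
  finally show ?thesis by simp
qed

lemma clique_bound:
  assumes X: "X \<in> F"
  shows "\<exists>t. card X \<le> sz (cX X) t + sz (cX X) (Suc t)"
proof -
  obtain u where u: "u \<in> X" using F_ne[OF X] by blast
  show ?thesis using clique_card[OF F_V[OF X] F_clique[OF X] u] cX_fst[OF X u] by simp
qed

theorem no_reg: "card S \<noteq> q * p"
proof
  assume cS: "card S = q * p"
  have cF: "card F * Suc d = q * p" using card_S cS by simp
  then have "Suc d dvd q * p" by (metis dvd_triv_right)
  then have cases: "Suc d = 1 \<or> Suc d = q \<or> Suc d = p \<or> Suc d = q * p" by (rule divisors)
  have Xc: "\<forall>X\<in>F. card X = Suc d" using F_card by blast
  have qp1: "q * p \<ge> 1" using q2 p3 by simp
  from cases show False
  proof (elim disjE)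
    assume D: "Suc d = 1"
    then have "card F = q * p" using cF by simp
    moreover have "\<forall>X\<in>F. cX X < nc"
    proof
      fix X assume X: "X \<in> F"
      obtain u where u: "u \<in> X" using F_ne[OF X] by blast
      have "u \<in> V" using F_V[OF X] u by blast
      then have "fst u < nc" by (cases u) (simp add: inV)
      then show "cX X < nc" using cX_fst[OF X u] by simp
    qed
    then have "card F \<le> nc + m" using slot_count ranges by (meson le_trans)
    moreover have "nc + m = q * p - 1" using ranges m_le q2 qlp qp1 unfolding nc_def by linarith
    ultimately show False using qp1 by linarith
  next
    assume D: "Suc d = q"
    then have cFp: "card F = p" using cF q2 by simp
    have "\<forall>X\<in>F. cX X < p - 1 - m"
    proof
      fix X assume X: "X \<in> F"
      show "cX X < p - 1 - m"
      proof (rule ccontr)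
        assume "\<not> cX X < p - 1 - m"
        then have "\<forall>t. sz (cX X) t + sz (cX X) (Suc t) \<le> q - 1" using sz_pair_ge_p1m by simp
        then have "card X \<le> q - 1" using clique_bound[OF X] le_trans by blast
        then show False using Xc X D q2 by simp
      qed
    qed
    then have "card F \<le> (p - 1 - m) + m" using slot_count ranges by (meson le_trans)
    then show False using cFp ranges m_le q2 qlp by linarith
  next
    assume D: "Suc d = p"
    then have cFq: "card F = q" using cF p3 by simp
    have "\<forall>X\<in>F. cX X < q - 1"
    proof
      fix X assume X: "X \<in> F"
      show "cX X < q - 1"
      proof (rule ccontr)
        assume "\<not> cX X < q - 1"
        then have "\<forall>t. sz (cX X) t + sz (cX X) (Suc t) \<le> p - 1" using sz_pair_ge_q1 by simp
        then have "card X \<le> p - 1" using clique_bound[OF X] le_trans by blast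
        then show False using Xc X D p3 by simp
      qed
    qed
    moreover have "\<forall>X\<in>F. card X \<ge> p" using Xc D by simp
    ultimately have "card F \<le> q - 1" by (rule comp_count)
    then show False using cFq q2 by simp
  next
    assume D: "Suc d = q * p"
    obtain x where x: "x \<in> S" using cS qp1 by (metis card.empty ex_in_conv not_one_le_zero)
    have X: "NS x \<in> F" using x by (simp add: F_def)
    obtain t where "card (NS x) \<le> sz (cX (NS x)) t + sz (cX (NS x)) (Suc t)" using clique_bound[OF X] by blast
    then have "card (NS x) \<le> q * p - 1" using sz_pair_all le_trans by blast
    then show False using Xc X D qp1 by simp
  qed
qed

end

context G8
begin

definition tot where "tot c = (\<Sum>t<4. sz c t)"

lemma card_V: "card V = (\<Sum>c<nc. tot c)"
proof -
  have "card V = (\<Sum>c\<in>{..<nc}. card (Sigma {..<4} (\<lambda>t. {..<sz c t})))"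
    unfolding V_def by (rule card_SigmaI) auto
  also have "\<dots> = (\<Sum>c<nc. tot c)"
    by (rule sum.cong[OF refl]) (simp add: card_SigmaI tot_def)
  finally show ?thesis .
qed

lemma sum_const_ivl: "(\<And>c. a \<le> c \<Longrightarrow> c < b \<Longrightarrow> f c = k) \<Longrightarrow> (\<Sum>c\<in>{a..<b}. f c) = (b - a) * (k::nat)"
  by (simp add: sum.cong[of "{a..<b}" "{a..<b}" f "\<lambda>_. k"])

lemma tot_A: "c < m \<Longrightarrow> tot c = (q*p - p) + 3 * (p - 1)"
  unfolding tot_def by (simp add: numeral_eq_Suc sz_A)
lemma tot_B: "m \<le> c \<Longrightarrow> c < q - 1 \<Longrightarrow> tot c = q*p - 1"
  unfolding tot_def by (simp add: numeral_eq_Suc sz_B)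
lemma tot_C: "q - 1 \<le> c \<Longrightarrow> c < p - 1 - m \<Longrightarrow> tot c = p - 1"
  unfolding tot_def by (simp add: numeral_eq_Suc sz_C)
lemma tot_D: "p - 1 - m \<le> c \<Longrightarrow> c < nc \<Longrightarrow> tot c = q - 1"
  unfolding tot_def by (simp add: numeral_eq_Suc sz_D)

lemma card_V_eq: "card V = m * ((q*p - p) + 3 * (p - 1)) + (q - 1 - m) * (q*p - 1)
   + (p - 1 - m - (q - 1)) * (p - 1) + (nc - (p - 1 - m)) * (q - 1)"
proof -
  have "(\<Sum>c<nc. tot c) = (\<Sum>c\<in>{0..<nc}. tot c)" by (simp add: atLeast0LessThan)
  also have "\<dots> = (\<Sum>c\<in>{0..<m}. tot c) + (\<Sum>c\<in>{m..<nc}. tot c)"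
    using ranges by (intro sum.atLeastLessThan_concat[symmetric]) auto
  also have "(\<Sum>c\<in>{m..<nc}. tot c) = (\<Sum>c\<in>{m..<q-1}. tot c) + (\<Sum>c\<in>{q-1..<nc}. tot c)"
    using ranges by (intro sum.atLeastLessThan_concat[symmetric]) auto
  also have "(\<Sum>c\<in>{q-1..<nc}. tot c) = (\<Sum>c\<in>{q-1..<p-1-m}. tot c) + (\<Sum>c\<in>{p-1-m..<nc}. tot c)"
    using ranges by (intro sum.atLeastLessThan_concat[symmetric]) auto
  also have "(\<Sum>c\<in>{0..<m}. tot c) = (m - 0) * ((q*p - p) + 3 * (p - 1))"
    by (rule sum_const_ivl) (simp add: tot_A)
  also have "(\<Sum>c\<in>{m..<q-1}. tot c) = (q - 1 - m) * (q*p - 1)"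
    by (rule sum_const_ivl) (simp add: tot_B)
  also have "(\<Sum>c\<in>{q-1..<p-1-m}. tot c) = (p - 1 - m - (q - 1)) * (p - 1)"
    by (rule sum_const_ivl) (simp add: tot_C)
  also have "(\<Sum>c\<in>{p-1-m..<nc}. tot c) = (nc - (p - 1 - m)) * (q - 1)"
    by (rule sum_const_ivl) (simp add: tot_D)
  finally show ?thesis using card_V by simp
qed

lemma card_V_int: "int (card V) + 1 = int (p^2 + 2 * q^2 * p) - int (4 * q * p) + 2 + int (p - 1) * int m"
proof -
  have m1: "m \<le> q - 1" and m2: "m \<le> p - q" using m_le by auto
  have qp: "2 * p \<le> q * p" using qp_ge .
  have pqp: "p \<le> q*p" using qp by linarith
  have e1: "int (q*p - p) = int q * int p - int p" using of_nat_diff[OF pqp, where 'a=int] by simp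
  have e2: "int (p - 1) = int p - 1" using p3 by simp
  have e3: "int (q - 1 - m) = int q - 1 - int m" using m1 q2 by simp
  have qp1: "1 \<le> q*p" using pqp p3 by linarith
  have e4: "int (q*p - 1) = int q * int p - 1" using of_nat_diff[OF qp1, where 'a=int] by simp
  have e5: "int (p - 1 - m - (q - 1)) = int p - int q - int m" using m2 qlp q2 by simp
  have e6a: "nc - (p - 1 - m) = q*p - p" using ranges m1 m2 pqp p3 q2 unfolding nc_def by linarith
  have e6: "int (nc - (p - 1 - m)) = int q * int p - int p" using e6a e1 by simp
  have e7: "int (q - 1) = int q - 1" using q2 by simp
  have e8: "int (4 * q * p) \<le> int (p^2 + 2 * q^2 * p)"
  proof -
    have h1: "4 * (q * p) \<le> (2 * q) * (q * p)" by (rule mult_right_mono) (use q2 in auto)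
    have h2: "(2 * q) * (q * p) = 2 * q^2 * p" by (simp add: power2_eq_square)
    have h3: "4 * q * p = 4 * (q * p)" by simp
    have "4 * q * p \<le> 2 * q^2 * p" using h1 h2 h3 by linarith
    then have "4 * q * p \<le> p^2 + 2 * q^2 * p" by linarith
    then show ?thesis by (simp only: of_nat_le_iff)
  qed
  have cv0: "int (card V) = int m * int ((q*p - p) + 3 * (p - 1)) + int (q - 1 - m) * int (q*p - 1)
     + int (p - 1 - m - (q - 1)) * int (p - 1) + int (nc - (p - 1 - m)) * int (q - 1)"
    unfolding card_V_eq by (simp only: of_nat_add of_nat_mult)
  have e0: "int ((q*p - p) + 3 * (p - 1)) = (int q * int p - int p) + 3 * (int p - 1)"
    by (simp only: of_nat_add of_nat_mult e1 e2 of_nat_numeral)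
  have cv: "int (card V) = int m * ((int q * int p - int p) + 3 * (int p - 1)) + (int q - 1 - int m) * (int q * int p - 1)
     + (int p - int q - int m) * (int p - 1) + (int q * int p - int p) * (int q - 1)"
    unfolding cv0 by (simp only: e0 e3 e4 e5 e6 e7 e2)
  have f1: "int (p^2 + 2 * q^2 * p) = int p^2 + 2 * int q^2 * int p" by simp
  have f2: "int (4 * q * p) = 4 * int q * int p" by simp
  show ?thesis unfolding f1 f2 e2 cv by (simp add: algebra_simps power2_eq_square)
qed

end

lemma ex_P: "\<exists>n::nat. n \<ge> 1 \<and> (\<forall>E. simple_graph {0..<n} E \<longrightarrow> has_induced_regular {0..<n} E k)"
proof -
  obtain r where r1: "r \<ge> 1" and R: "\<forall>(V::nat set) (E::nat set set). finite V \<and> card V \<ge> r \<longrightarrow>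
    (\<exists>R \<subseteq> V. card R = k \<and> clique R E \<or> card R = k \<and> indep R E)"
    using ramsey2[of k k] by blast
  have main: "has_induced_regular {0..<r} E k" if sg: "simple_graph {0..<r} E" for E
  proof -
    define Es where "Es = {{x,y} | x y. E x y}"
    obtain Rs where Rs: "Rs \<subseteq> {0..<r}" "card Rs = k" and ci: "clique Rs Es \<or> indep Rs Es"
      using R[rule_format, of "{0..<r}" Es] by auto
    have sym: "\<And>x y. E x y \<Longrightarrow> E y x" and irr: "\<And>x. \<not> E x x"
      using sg unfolding simple_graph_def by blast+
    have Es_iff: "{v,w} \<in> Es \<longleftrightarrow> E v w" for v w
    proof
      assume "{v,w} \<in> Es"
      then obtain x y where xy: "{v,w} = {x,y}" "E x y" unfolding Es_def by blast
      then have "(v = x \<and> w = y) \<or> (v = y \<and> w = x)" by (auto simp: doubleton_eq_iff)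
      then show "E v w" using xy sym by blast
    next
      assume "E v w" then show "{v,w} \<in> Es" unfolding Es_def by blast
    qed
    from ci show ?thesis
    proof
      assume c: "clique Rs Es"
      have "\<forall>x\<in>Rs. deg_in E Rs x = k - 1"
      proof
        fix x assume x: "x \<in> Rs"
        have "{y\<in>Rs. E x y} = Rs - {x}"
        proof (rule set_eqI)
          fix y
          show "y \<in> {y\<in>Rs. E x y} \<longleftrightarrow> y \<in> Rs - {x}"
          proof
            assume "y \<in> {y\<in>Rs. E x y}"
            then have "y \<in> Rs" "E x y" by simp_all
            moreover have "y \<noteq> x" using irr \<open>E x y\<close> by metis
            ultimately show "y \<in> Rs - {x}" by simp
          next
            assume y: "y \<in> Rs - {x}"
            then have "{x,y} \<in> Es" using c x unfolding clique_def by simp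
            then have "E x y" using Es_iff by simp
            then show "y \<in> {y\<in>Rs. E x y}" using y by simp
          qed
        qed
        then show "deg_in E Rs x = k - 1"
          unfolding deg_in_def using x Rs finite_subset[OF Rs(1)] by simp
      qed
      then show ?thesis unfolding has_induced_regular_def using Rs by blast
    next
      assume c: "indep Rs Es"
      have "\<forall>x\<in>Rs. deg_in E Rs x = 0"
      proof
        fix x assume x: "x \<in> Rs"
        have "{y\<in>Rs. E x y} = {}"
        proof (rule equals0I)
          fix y assume y: "y \<in> {y\<in>Rs. E x y}"
          then have yR: "y \<in> Rs" and e: "E x y" by simp_all
          have "y \<noteq> x" using irr e by metis
          then have "{x,y} \<notin> Es" using c x yR unfolding indep_def by simp
          then show False using Es_iff e by simp
        qed
        then show "deg_in E Rs x = 0" unfolding deg_in_def by (simp only: card.empty)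
      qed
      then show ?thesis unfolding has_induced_regular_def using Rs by blast
    qed
  qed
  show ?thesis
  proof (rule exI[where x=r], intro conjI allI impI)
    show "1 \<le> r" using r1 by simp
    fix E assume "simple_graph {0..<r} E"
    then show "has_induced_regular {0..<r} E k" by (rule main)
  qed
qed

context G8
begin

lemma ex_graph:
  assumes n: "n \<le> card V"
  shows "\<exists>E. simple_graph {0..<n} E \<and> \<not> has_induced_regular {0..<n} E (q*p)"
proof -
  obtain h where h: "bij_betw h {0..<card V} V" using ex_bij_betw_nat_finite[OF finV] by blast
  define E where "E i j = (i < n \<and> j < n \<and> adj (h i) (h j))" for i j
  have sg: "simple_graph {0..<n} E"
    unfolding simple_graph_def E_def using adj_sym adj_irrefl by auto
  have "\<not> has_induced_regular {0..<n} E (q*p)"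
  proof
    assume "has_induced_regular {0..<n} E (q*p)"
    then obtain S d where S: "S \<subseteq> {0..<n}" "card S = q*p" and reg: "\<forall>x\<in>S. deg_in E S x = d"
      unfolding has_induced_regular_def by blast
    have Ssub: "S \<subseteq> {0..<card V}" using S n by auto
    have inj: "inj_on h S" using bij_betw_imp_inj_on[OF h] Ssub inj_on_subset by blast
    define T where "T = h ` S"
    have TV: "T \<subseteq> V" using bij_betw_imp_surj_on[OF h] Ssub unfolding T_def by blast
    have cT: "card T = q*p" using inj S unfolding T_def by (simp add: card_image)
    have regT: "\<forall>x\<in>T. deg_in adj T x = d"
    proof
      fix z assume "z \<in> T"
      then obtain x where x: "x \<in> S" and z: "z = h x" unfolding T_def by (rule imageE)
      have eq: "{w \<in> T. adj z w} = h ` {y\<in>S. E x y}"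
      proof
        show "{w \<in> T. adj z w} \<subseteq> h ` {y\<in>S. E x y}"
        proof
          fix w assume "w \<in> {w \<in> T. adj z w}"
          then obtain y where y: "y \<in> S" "w = h y" "adj z w" unfolding T_def by blast
          have "E x y" using x y S z unfolding E_def by auto
          then show "w \<in> h ` {y\<in>S. E x y}" using y by blast
        qed
        show "h ` {y\<in>S. E x y} \<subseteq> {w \<in> T. adj z w}"
          using z unfolding T_def E_def by auto
      qed
      have "card (h ` {y\<in>S. E x y}) = card {y\<in>S. E x y}"
        using inj by (intro card_image) (rule inj_on_subset, auto)
      then show "deg_in adj T z = d" using eq reg x unfolding deg_in_def by simp
    qed
    interpret G8S q p T d
      using TV regT by unfold_locales
    show False using no_reg cT by simp
  qed
  then show ?thesis using sg by blast
qed

lemma N_eq_ge: "N_eq (q*p) \<ge> card V + 1"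
proof -
  let ?P = "\<lambda>n::nat. n \<ge> 1 \<and> (\<forall>E. simple_graph {0..<n} E \<longrightarrow> has_induced_regular {0..<n} E (q*p))"
  have PL: "?P (Least ?P)" using ex_P[of "q*p"] by (rule LeastI_ex)
  show ?thesis
  proof (rule ccontr)
    assume "\<not> card V + 1 \<le> N_eq (q*p)"
    then have "Least ?P \<le> card V" unfolding N_eq_def by simp
    then obtain E where "simple_graph {0..<Least ?P} E" "\<not> has_induced_regular {0..<Least ?P} E (q*p)"
      using ex_graph by blast
    then show False using PL by blast
  qed
qed

end

theorem theorem8:
  fixes p q :: nat
  assumes "prime p" and "prime q" and "q < p"
  shows "int (N_eq (q * p)) \<ge> int (p^2 + 2 * q^2 * p) - int (4 * q * p) + 2
           + int (p - 1) * int (min (q - 1) (p - q))"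
proof -
  interpret G8 q p using assms by unfold_locales
  have "int (N_eq (q*p)) \<ge> int (card V) + 1" using N_eq_ge by linarith
  then show ?thesis using card_V_int unfolding m_def by linarith
qed

end
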